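(* Let $f,g,f_n,g_n\in\mathcal D$ ($n\in\mathbb N$) with $f_n\to f$ and $g_n\to g$ uniformly on $[0,1]$. Then: (a) $\chi(f,g)\le\sup_{n\in\mathbb N}\chi(f_n,g_n)$; (b) if $g_n\lhd f_n$ for all $n\in\mathbb N$, then either $f=g$ or $g\lhd f$.
   Context: $\mathcal D$: the set of continuous strictly decreasing $f\colon[0,1]\to[0,1]$ with $f(0)=1$, $f(1)=0$. For $f\in\mathcal D$ and $a>0$, $f_{[a]}\colon[0,\frac1a]\to[0,1]$, $x\mapsto f(ax)$; for $b>0$, $f_{[a]}-bg$ is considered on $[0,\min\{1,\frac1a\}]$. Sign switches: for a continuous $\Delta\colon[c_0,d_0]\to\mathbb R$, a closed subinterval $[c,d]$ with $c_0<c\le d<d_0$ and $\Delta([c,d])=\{0\}$ is a sign switch if there is $\delta\in(0,\min\{c-c_0,d_0-d\}]$ with $\Delta(c-x)\Delta(d+x)<0$ for all $x\in(0,\delta]$; $\chi\Delta$ is the number of sign switches. Crossing number: $\chi(f,g):=\sup\{\chi(f_{[a]}-bg): a,b>0\}\in\mathbb N_0\cup\{\infty\}$. Domination: $g\lhd f$ means $\chi(f,g)=2$ and $g\le f$ pointwise. *)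

theory Defs
  imports "HOL-Analysis.Analysis" "HOL-Library.Extended_Nat"
begin

definition classD :: "(real \<Rightarrow> real) \<Rightarrow> bool" where
  "classD f \<longleftrightarrow> continuous_on {0..1} f \<and> strict_antimono_on {0..1} f
     \<and> f ` {0..1} \<subseteq> {0..1} \<and> f 0 = 1 \<and> f 1 = 0"

definition sign_switches :: "(real \<Rightarrow> real) \<Rightarrow> real \<Rightarrow> real \<Rightarrow> (real \<times> real) set" where
  "sign_switches \<Delta> c0 d0 = {(c, d). c0 < c \<and> c \<le> d \<and> d < d0 \<and>
     (\<forall>x\<in>{c..d}. \<Delta> x = 0) \<and>
     (\<exists>\<delta>>0. \<delta> \<le> min (c - c0) (d0 - d) \<and>
        (\<forall>x\<in>{0<..\<delta>}. \<Delta> (c - x) * \<Delta> (d + x) < 0))}"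

definition num_switches :: "(real \<Rightarrow> real) \<Rightarrow> real \<Rightarrow> real \<Rightarrow> enat" where
  "num_switches \<Delta> c0 d0 =
     (if finite (sign_switches \<Delta> c0 d0) then enat (card (sign_switches \<Delta> c0 d0)) else \<infinity>)"

definition crossing :: "(real \<Rightarrow> real) \<Rightarrow> (real \<Rightarrow> real) \<Rightarrow> enat" where
  "crossing f g = (SUP ab \<in> {ab. fst ab > 0 \<and> snd ab > 0}.
      num_switches (\<lambda>x. f (fst ab * x) - snd ab * g x) 0 (min 1 (1 / fst ab)))"

definition dominated :: "(real \<Rightarrow> real) \<Rightarrow> (real \<Rightarrow> real) \<Rightarrow> bool" where
  "dominated g f \<longleftrightarrow> crossing f g = 2 \<and> (\<forall>x\<in>{0..1}. g x \<le> f x)"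

end

theory Submission
  imports Defs
begin



lemma count_measure_bound:
  fixes C :: "nat \<Rightarrow> real set" and n K :: nat and r :: "nat \<Rightarrow> real"
  assumes C: "\<And>j. C j \<in> sets lborel" and Cm: "\<And>j. emeasure lborel (C j) \<le> ennreal (r j)"
    and r: "\<And>j. 0 \<le> r j"
  shows "ennreal (real K) * emeasure lborel {y. K \<le> card {j. j<n \<and> y \<in> C j}} \<le> ennreal (\<Sum>j<n. r j)"
    and "{y. K \<le> card {j. j<n \<and> y \<in> C j}} \<in> sets lborel"
proof -
  define S where "S y = (\<Sum>j<n. indicator (C j) y :: ennreal)" for y
  have Seq: "S y = of_nat (card {j. j<n \<and> y \<in> C j})" for y
  proof -
    have "S y = (\<Sum>j\<in>{..<n}. indicator {j. y \<in> C j} j)"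
      unfolding S_def by (intro sum.cong) (auto simp: indicator_def)
    also have "\<dots> = of_nat (card ({..<n} \<inter> {j. y \<in> C j}))"
      by (simp add: indicator_def sum.If_cases)
    also have "{..<n} \<inter> {j. y \<in> C j} = {j. j<n \<and> y \<in> C j}" by auto
    finally show ?thesis .
  qed
  have Smeas: "S \<in> borel_measurable lborel" unfolding S_def using C by measurable
  define A where "A = {y. of_nat K \<le> S y}"
  have Aeq: "{y. K \<le> card {j. j<n \<and> y \<in> C j}} = A" unfolding A_def Seq by auto
  have Ameas: "A \<in> sets lborel" unfolding A_def using Smeas by measurable
  have "ennreal (real K) * emeasure lborel A = (\<integral>\<^sup>+ y. ennreal (real K) * indicator A y \<partial>lborel)"
    using Ameas by (simp add: nn_integral_cmult_indicator)
  also have "\<dots> \<le> (\<integral>\<^sup>+ y. S y \<partial>lborel)"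
    by (intro nn_integral_mono) (auto simp: A_def indicator_def ennreal_of_nat_eq_real_of_nat)
  also have "\<dots> = (\<Sum>j<n. emeasure lborel (C j))"
    unfolding S_def using C by (subst nn_integral_sum) auto
  also have "\<dots> \<le> (\<Sum>j<n. ennreal (r j))" by (intro sum_mono Cm)
  also have "\<dots> = ennreal (\<Sum>j<n. r j)" using r by simp
  finally show "ennreal (real K) * emeasure lborel {y. K \<le> card {j. j<n \<and> y \<in> C j}} \<le> ennreal (\<Sum>j<n. r j)" unfolding Aeq .
  show "{y. K \<le> card {j. j<n \<and> y \<in> C j}} \<in> sets lborel" unfolding Aeq by (rule Ameas)
qed



lemma grid_index:
  fixes L R x :: real and n :: nat
  assumes LR: "L < R" and n: "n > 0" and x: "L \<le> x" "x \<le> R"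
  shows "\<exists>j<n. L + real j * (R - L) / real n \<le> x \<and> x \<le> L + real (Suc j) * (R - L) / real n"
proof -
  define u where "u = (x - L) * real n / (R - L)"
  have u0: "0 \<le> u" using LR x n unfolding u_def by auto
  have un: "u \<le> real n" using LR x n unfolding u_def by (auto simp: field_simps)
  have xu: "x = L + u * (R - L) / real n" using LR n unfolding u_def by (auto simp: field_simps)
  show ?thesis
  proof (cases "u < real n")
    case True
    define j where "j = nat \<lfloor>u\<rfloor>"
    have j1: "real j \<le> u" unfolding j_def using u0 by linarith
    have j2: "u \<le> real (Suc j)" unfolding j_def using u0 by linarith
    have jn: "j < n" unfolding j_def using True u0 by linarith
    have "real j * (R - L) / real n \<le> u * (R - L) / real n"
      using j1 LR n by (intro divide_right_mono mult_right_mono) auto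
    moreover have "u * (R - L) / real n \<le> real (Suc j) * (R - L) / real n"
      using j2 LR n by (intro divide_right_mono mult_right_mono) auto
    ultimately show ?thesis using jn xu by (intro exI[of _ j]) auto
  next
    case False
    hence "u = real n" using un by auto
    hence xR: "x = R" using xu n by auto
    have "real (n - 1) * (R - L) / real n \<le> real n * (R - L) / real n"
      using LR n by (intro divide_right_mono mult_right_mono) auto
    moreover have "Suc (n - 1) = n" using n by auto
    ultimately show ?thesis using xR n LR by (intro exI[of _ "n - 1"]) auto
  qed
qed


lemma ev_pos: "eventually P (at_right (0::real)) \<Longrightarrow> \<exists>d>0. P d"
  unfolding eventually_at_right_field by (metis field_lbound_gt_zero)

lemma finite_level_exists:
  fixes h V :: "real \<Rightarrow> real" and L R y1 y2 :: real
  assumes LR: "L < R" and y12: "y1 < y2"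
  and V: "\<And>s t x x'. L \<le> s \<Longrightarrow> s \<le> x \<Longrightarrow> x \<le> t \<Longrightarrow> s \<le> x' \<Longrightarrow> x' \<le> t \<Longrightarrow> t \<le> R
            \<Longrightarrow> \<bar>h x - h x'\<bar> \<le> V t - V s"
  shows "\<exists>y\<in>{y1<..<y2}. finite {x\<in>{L..R}. h x = y}"
proof (rule ccontr)
  assume nf: "\<not> ?thesis"
  hence inf: "\<And>y. y1 < y \<Longrightarrow> y < y2 \<Longrightarrow> infinite {x\<in>{L..R}. h x = y}" by auto
  define T where "T = V R - V L"
  define tt where "tt n j = L + real j * (R - L) / real n" for n j :: nat
  define r where "r n j = V (tt n (Suc j)) - V (tt n j)" for n j
  define C where "C n j = {h (tt n j) - r n j .. h (tt n j) + r n j}" for n j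
  define K :: nat where "K = nat \<lceil>2*T/(y2-y1)\<rceil> + 1"
  define B where "B n = {y. K \<le> card {j. j<n \<and> y \<in> C n j}}" for n
  define A where "A N = (\<Inter>n\<in>{N..}. B n)" for N
  have ttL: "L \<le> tt n j" if "n > 0" for n j
    using that LR unfolding tt_def by auto
  have ttR: "tt n j \<le> R" if "n > 0" "j \<le> n" for n j
  proof -
    have "real j * (R - L) / real n \<le> real n * (R - L) / real n"
      using that LR by (intro divide_right_mono mult_right_mono) auto
    thus ?thesis using that unfolding tt_def by auto
  qed
  have ttmono: "tt n j \<le> tt n (Suc j)" if "n > 0" for n j
    using that LR unfolding tt_def by (auto intro!: divide_right_mono mult_right_mono)
  have rnn: "0 \<le> r n j" if "n > 0" "j < n" for n j
  proof -
    have "\<bar>h (tt n j) - h (tt n j)\<bar> \<le> V (tt n (Suc j)) - V (tt n j)"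
      using that by (intro V ttL ttR ttmono) auto
    thus ?thesis unfolding r_def by simp
  qed
  have Cm: "emeasure lborel (C n j) \<le> ennreal (2 * max 0 (r n j))" for n j
    unfolding C_def by (cases "0 \<le> r n j") auto
  have Cs: "C n j \<in> sets lborel" for n j unfolding C_def by simp
  have sumr: "(\<Sum>j<n. 2 * max 0 (r n j)) = 2 * T" if "n > 0" for n
  proof -
    have "(\<Sum>j<n. 2 * max 0 (r n j)) = 2 * (\<Sum>j<n. r n j)"
      using rnn[OF that] by (simp add: sum_distrib_left)
    also have "(\<Sum>j<n. r n j) = V (tt n n) - V (tt n 0)"
      unfolding r_def by (rule sum_lessThan_telescope)
    also have "tt n n = R" using that unfolding tt_def by auto
    also have "tt n 0 = L" unfolding tt_def by auto
    finally show ?thesis unfolding T_def by simp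
  qed
  have Bbound: "ennreal (real K) * emeasure lborel (B n) \<le> ennreal (2 * T)" if "n > 0" for n
    using count_measure_bound(1)[of "C n" "\<lambda>j. 2 * max 0 (r n j)" K n, OF Cs Cm] sumr[OF that]
    unfolding B_def by simp
  have Bs: "B n \<in> sets lborel" for n
    unfolding B_def by (rule count_measure_bound(2)[of "C n" "\<lambda>j. 2 * max 0 (r n j)", OF Cs Cm]) simp
  have As: "A N \<in> sets lborel" for N
    unfolding A_def using Bs by (intro sets.countable_INT) auto
  have Ainc: "incseq A" unfolding incseq_def A_def by auto
  have Abound: "ennreal (real K) * emeasure lborel (A N) \<le> ennreal (2 * T)" for N
  proof -
    have "A N \<subseteq> B (Suc N)" unfolding A_def by auto
    hence "emeasure lborel (A N) \<le> emeasure lborel (B (Suc N))" by (intro emeasure_mono Bs)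
    hence "ennreal (real K) * emeasure lborel (A N) \<le> ennreal (real K) * emeasure lborel (B (Suc N))"
      by (intro mult_left_mono) auto
    also have "\<dots> \<le> ennreal (2 * T)" by (rule Bbound) simp
    finally show ?thesis .
  qed
  have Ubound: "ennreal (real K) * emeasure lborel (\<Union>N. A N) \<le> ennreal (2 * T)"
  proof -
    have "emeasure lborel (\<Union>N. A N) = (SUP N. emeasure lborel (A N))"
      using SUP_emeasure_incseq[of A lborel] As Ainc by (metis image_subset_iff)
    hence "ennreal (real K) * emeasure lborel (\<Union>N. A N) = (SUP N. ennreal (real K) * emeasure lborel (A N))"
      by (simp add: SUP_mult_left_ennreal)
    also have "\<dots> \<le> ennreal (2 * T)" by (intro SUP_least Abound)
    finally show ?thesis .
  qed
  have cover: "{y1<..<y2} \<subseteq> (\<Union>N. A N)"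
  proof
    fix y assume y: "y \<in> {y1<..<y2}"
    have X: "infinite {x\<in>{L..R}. h x = y}" using inf y by auto
    obtain S where S: "finite S" "card S = K" "S \<subseteq> {x\<in>{L..R}. h x = y}"
      using infinite_arbitrarily_large[OF X] by blast
    have "eventually (\<lambda>d. \<forall>x\<in>S. \<forall>x'\<in>S. x \<noteq> x' \<longrightarrow> d < \<bar>x - x'\<bar>) (at_right 0)"
    proof (intro eventually_ball_finite S ballI)
      fix x x' assume "x \<in> S" "x' \<in> S"
      show "eventually (\<lambda>d. x \<noteq> x' \<longrightarrow> d < \<bar>x - x'\<bar>) (at_right 0)"
      proof (cases "x = x'")
        case False
        hence "0 < \<bar>x - x'\<bar>" by auto
        hence "eventually (\<lambda>d. d < \<bar>x - x'\<bar>) (at_right 0)"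
          by (intro order_tendstoD(2)[OF tendsto_ident_at]) 
        thus ?thesis by (auto elim: eventually_mono)
      qed simp
    qed
    then obtain d where d: "d > 0" "\<And>x x'. x \<in> S \<Longrightarrow> x' \<in> S \<Longrightarrow> x \<noteq> x' \<Longrightarrow> d < \<bar>x - x'\<bar>"
      using ev_pos by blast
    obtain N :: nat where N: "(R - L) / d < real N" using reals_Archimedean2 by blast
    have Npos: "N > 0" using N LR d by (cases "N = 0") (auto simp: field_simps)
    have "y \<in> A N" unfolding A_def B_def
    proof (intro InterI, clarsimp)
      fix n assume nN: "N \<le> n"
      have npos: "n > 0" using nN Npos by auto
      define idx where "idx x = (SOME j. j<n \<and> tt n j \<le> x \<and> x \<le> tt n (Suc j))" for x
      have idx: "idx x < n \<and> tt n (idx x) \<le> x \<and> x \<le> tt n (Suc (idx x))" if "x \<in> S" for x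
      proof -
        have "L \<le> x" "x \<le> R" using that S by auto
        from grid_index[OF LR npos this] have "\<exists>j. j<n \<and> tt n j \<le> x \<and> x \<le> tt n (Suc j)"
          unfolding tt_def by blast
        thus ?thesis unfolding idx_def by (rule someI_ex)
      qed
      have width: "tt n (Suc j) - tt n j < d" for j
      proof -
        have "tt n (Suc j) - tt n j = (R - L) / real n" unfolding tt_def using npos by (simp add: field_simps)
        also have "\<dots> \<le> (R - L) / real N" using LR Npos nN by (intro divide_left_mono) auto
        also have "\<dots> < d" using N d Npos by (simp add: field_simps)
        finally show ?thesis .
      qed
      have inj: "inj_on idx S"
      proof (rule inj_onI, rule ccontr)
        fix x x' assume xx: "x \<in> S" "x' \<in> S" "idx x = idx x'" "x \<noteq> x'"
        have "\<bar>x - x'\<bar> < d" using idx[OF xx(1)] idx[OF xx(2)] xx(3) width[of "idx x"] by auto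
        thus False using d(2)[OF xx(1,2,4)] by auto
      qed
      have img: "idx ` S \<subseteq> {j. j < n \<and> y \<in> C n j}"
      proof clarify
        fix x assume x: "x \<in> S"
        have hx: "h x = y" using x S by auto
        let ?j = "idx x"
        have "\<bar>h x - h (tt n ?j)\<bar> \<le> V (tt n (Suc ?j)) - V (tt n ?j)"
          using idx[OF x] by (intro V ttL ttR npos ttmono) auto
        thus "idx x < n \<and> y \<in> C n (idx x)" using idx[OF x] hx unfolding C_def r_def by auto
      qed
      show "K \<le> card {j. j < n \<and> y \<in> C n j}"
        using card_inj_on_le[OF inj img] S by auto
    qed
    thus "y \<in> (\<Union>N. A N)" by blast
  qed
  have UAs: "(\<Union>N. A N) \<in> sets lborel" using As by blast
  have "ennreal (y2 - y1) = emeasure lborel {y1<..<y2}" using y12 by simp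
  also have "\<dots> \<le> emeasure lborel (\<Union>N. A N)" by (rule emeasure_mono[OF cover UAs])
  finally have "ennreal (real K) * ennreal (y2 - y1) \<le> ennreal (real K) * emeasure lborel (\<Union>N. A N)"
    by (intro mult_left_mono) auto
  also note Ubound
  finally have "ennreal (real K * (y2 - y1)) \<le> ennreal (2 * T)"
    using y12 by (simp add: ennreal_mult)
  moreover have "0 \<le> T" using V[of L L R L] LR unfolding T_def by auto
  ultimately have le: "real K * (y2 - y1) \<le> 2 * T"
    using y12 by (subst (asm) ennreal_le_iff2) auto
  have "2 * T / (y2 - y1) < real K" unfolding K_def by linarith
  hence "2 * T < real K * (y2 - y1)" using y12 by (simp add: field_simps)
  thus False using le by linarith
qed




lemma switch_exists:
  fixes \<Delta> :: "real \<Rightarrow> real"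
  assumes cont: "continuous_on {l..r} \<Delta>" and pos: "\<Delta> l > 0" and neg: "\<Delta> r < 0"
    and fin: "finite {x\<in>{l..r}. \<Delta> x = 0}" and c0: "c0 \<le> l" and d0: "r \<le> d0" and lr0: "l < r"
  shows "\<exists>c d. (c, d) \<in> sign_switches \<Delta> c0 d0 \<and> l < c \<and> d < r"
proof -
  define N where "N = {x\<in>{l..r}. \<Delta> x < 0}"
  define M where "M = {l..r} \<inter> \<Delta> -` {..0}"
  define Z where "Z = {x\<in>{l..r}. \<Delta> x = 0}"
  have lr: "l \<le> r" using lr0 by simp
  have rN: "r \<in> N" unfolding N_def using neg lr by auto
  have bdd: "bdd_below N" unfolding N_def by (auto intro: bdd_belowI[of _ l])
  define z where "z = Inf N"
  have Mc: "closed M" unfolding M_def by (intro continuous_closed_preimage cont) auto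
  have NM: "N \<subseteq> M" unfolding N_def M_def by auto
  have "z \<in> closure N" unfolding z_def using rN bdd by (intro closure_contains_Inf) auto
  hence zM: "z \<in> M" using closure_minimal[OF NM Mc] by auto
  hence zlr: "l \<le> z" "z \<le> r" and zle: "\<Delta> z \<le> 0" unfolding M_def by auto
  have lz: "l < z" using zlr zle pos by (cases "l = z") auto
  have left: "0 \<le> \<Delta> x" if "l \<le> x" "x < z" for x
  proof (rule ccontr)
    assume "\<not> 0 \<le> \<Delta> x"
    hence "x \<in> N" unfolding N_def using that zlr by auto
    hence "z \<le> x" unfolding z_def using bdd by (rule cInf_lower)
    thus False using that by auto
  qed
  have cl: "closure {l..<z} = {l..z}" using lz by simp
  have "0 \<le> \<Delta> z"
    using continuous_ge_on_closure[where S="{l..<z}" and f=\<Delta> and x=z and a=0] cl lz zlr left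
      continuous_on_subset[OF cont, of "{l..z}"] by auto
  hence z0: "\<Delta> z = 0" using zle by auto
  have zr: "z < r" using z0 neg zlr by (cases "z = r") auto
  have "eventually (\<lambda>d. (\<forall>x\<in>Z. x \<noteq> z \<longrightarrow> d < \<bar>x - z\<bar>) \<and> d < z - l \<and> d < r - z) (at_right 0)"
  proof (intro eventually_conj eventually_ball_finite ballI)
    show "finite Z" using fin unfolding Z_def .
    fix x assume "x \<in> Z"
    show "eventually (\<lambda>d. x \<noteq> z \<longrightarrow> d < \<bar>x - z\<bar>) (at_right 0)"
    proof (cases "x = z")
      case False
      hence "0 < \<bar>x - z\<bar>" by auto
      hence "eventually (\<lambda>d. d < \<bar>x - z\<bar>) (at_right 0)"
        by (intro order_tendstoD(2)[OF tendsto_ident_at])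
      thus ?thesis by (auto elim: eventually_mono)
    qed simp
  qed (use lz zr in \<open>auto intro!: order_tendstoD(2)[OF tendsto_ident_at]\<close>)
  then obtain d where d: "d > 0" "\<And>x. x \<in> Z \<Longrightarrow> x \<noteq> z \<Longrightarrow> d < \<bar>x - z\<bar>" "d < z - l" "d < r - z"
    using ev_pos by blast
  have nz: "\<Delta> w \<noteq> 0" if "w \<noteq> z" "\<bar>w - z\<bar> \<le> d / 2" for w
  proof
    assume "\<Delta> w = 0"
    moreover have "l \<le> w" "w \<le> r" using that(2) d(1,3,4) by (auto simp: abs_le_iff; linarith)+
    ultimately have "w \<in> Z" unfolding Z_def by auto
    thus False using d(2)[of w] that d(1) by auto
  qed
  have sgn: "\<Delta> (z - x) * \<Delta> (z + x) < 0" if x: "0 < x" "x \<le> d / 2" for x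
  proof -
    have "0 \<le> \<Delta> (z - x)" using left[of "z - x"] x d by auto
    moreover have "\<Delta> (z - x) \<noteq> 0" using nz[of "z - x"] x by auto
    ultimately have lpos: "\<Delta> (z - x) > 0" by auto
    have rneg: "\<Delta> (z + x) < 0"
    proof (rule ccontr)
      assume "\<not> \<Delta> (z + x) < 0"
      hence rp: "0 \<le> \<Delta> (z + x)" by auto
      have "Inf N < z + x" using x unfolding z_def[symmetric] by auto
      then obtain s where s: "s \<in> N" "s < z + x" using cInf_less_iff[of N] rN bdd by blast
      have zs: "z \<le> s" unfolding z_def using s(1) bdd by (rule cInf_lower)
      have sneg: "\<Delta> s < 0" using s(1) unfolding N_def by auto
      have "s \<noteq> z" using sneg z0 by auto
      hence zs': "z < s" using zs by auto
      have "continuous_on {s..z + x} \<Delta>"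
        using s zs x d by (intro continuous_on_subset[OF cont]) auto
      from IVT'[of \<Delta> s 0 "z + x", OF _ rp _ this] sneg s obtain w where w: "s \<le> w" "w \<le> z + x" "\<Delta> w = 0"
        by auto
      thus False using nz[of w] zs' x by auto
    qed
    show ?thesis using lpos rneg by (rule mult_pos_neg)
  qed
  have "(z, z) \<in> sign_switches \<Delta> c0 d0"
    unfolding sign_switches_def
  proof (clarsimp, intro conjI)
    show "c0 < z" using c0 lz by auto
    show "z < d0" using d0 zr by auto
    show "\<Delta> z = 0" by (rule z0)
    show "\<exists>\<delta>>0. \<delta> \<le> z - c0 \<and> \<delta> \<le> d0 - z \<and> (\<forall>x\<in>{0<..\<delta>}. \<Delta> (z - x) * \<Delta> (z + x) < 0)"
      using d c0 d0 sgn by (intro exI[of _ "d / 2"]) auto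
  qed
  thus ?thesis using lz zr by blast
qed

lemma sign_switches_uminus: "sign_switches (\<lambda>x. - \<Delta> x) c0 d0 = sign_switches \<Delta> c0 d0"
  unfolding sign_switches_def by auto

lemma switch_exists2:
  fixes \<Delta> :: "real \<Rightarrow> real"
  assumes cont: "continuous_on {l..r} \<Delta>" and sg: "\<Delta> l * \<Delta> r < 0"
    and fin: "finite {x\<in>{l..r}. \<Delta> x = 0}" and c0: "c0 \<le> l" and d0: "r \<le> d0" and lr0: "l < r"
  shows "\<exists>c d. (c, d) \<in> sign_switches \<Delta> c0 d0 \<and> l < c \<and> d < r"
proof (cases "\<Delta> l > 0")
  case True
  hence "\<Delta> r < 0" using sg by (simp add: mult_less_0_iff)
  thus ?thesis using switch_exists[OF cont True _ fin c0 d0 lr0] by blast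
next
  case False
  hence a: "- \<Delta> l > 0" "- \<Delta> r < 0" using sg by (auto simp: mult_less_0_iff)
  have "continuous_on {l..r} (\<lambda>x. - \<Delta> x)" using cont by (intro continuous_intros)
  from switch_exists[OF this a _ c0 d0 lr0] fin show ?thesis
    unfolding sign_switches_uminus by auto
qed



lemma ratio_var:
  fixes px px' ps pt qx qx' qs qt qR :: real
  assumes "0 \<le> px" "px \<le> 1" "pt \<le> px" "px \<le> ps" "pt \<le> px'" "px' \<le> ps"
    and "0 < qR" "qR \<le> qt" "qt \<le> qx" "qx \<le> qs" "qt \<le> qx'" "qx' \<le> qs"
  shows "\<bar>px / qx - px' / qx'\<bar> \<le> (1 / qt - 1 / qs) + (1 / qR) * (ps - pt)"
proof -
  have e: "px / qx - px' / qx' = px * (1 / qx - 1 / qx') + (px - px') * (1 / qx')"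
    by (simp add: algebra_simps diff_divide_distrib)
  have q0: "0 < qt" "0 < qx" "0 < qx'" "0 < qs" using assms by auto
  have a1: "\<bar>1 / qx - 1 / qx'\<bar> \<le> 1 / qt - 1 / qs"
  proof -
    have "1 / qx \<le> 1 / qt" "1 / qs \<le> 1 / qx" "1 / qx' \<le> 1 / qt" "1 / qs \<le> 1 / qx'"
      using assms q0 by (auto intro: divide_left_mono)
    thus ?thesis by (auto simp: abs_le_iff)
  qed
  have a2: "\<bar>px * (1 / qx - 1 / qx')\<bar> \<le> 1 / qt - 1 / qs"
  proof -
    have "\<bar>px * (1 / qx - 1 / qx')\<bar> = px * \<bar>1 / qx - 1 / qx'\<bar>" using assms by (simp add: abs_mult)
    also have "\<dots> \<le> 1 * \<bar>1 / qx - 1 / qx'\<bar>" using assms by (intro mult_right_mono) auto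
    finally show ?thesis using a1 by simp
  qed
  have a3: "\<bar>(px - px') * (1 / qx')\<bar> \<le> (1 / qR) * (ps - pt)"
  proof -
    have "\<bar>(px - px') * (1 / qx')\<bar> = \<bar>px - px'\<bar> * (1 / qx')" using q0 by (simp add: abs_mult)
    also have "\<dots> \<le> (ps - pt) * (1 / qR)"
      using assms q0 by (intro mult_mono divide_left_mono) (auto simp: abs_le_iff)
    finally show ?thesis by (simp add: mult.commute)
  qed
  show ?thesis unfolding e using a2 a3 abs_triangle_ineq[of "px * (1 / qx - 1 / qx')" "(px - px') * (1 / qx')"]
    by linarith
qed



lemma key:
  fixes \<phi> \<psi> :: "real \<Rightarrow> real" and D b :: real and P :: "(real \<times> real) set"
  assumes finP: "finite P"
  and Pin: "\<And>l r. (l, r) \<in> P \<Longrightarrow> 0 < l \<and> l < r \<and> r < D"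
  and Pdisj: "\<And>p p'. p \<in> P \<Longrightarrow> p' \<in> P \<Longrightarrow> p \<noteq> p' \<Longrightarrow> {fst p<..<snd p} \<inter> {fst p'<..<snd p'} = {}"
  and cphi: "continuous_on {0..D} \<phi>" and cpsi: "continuous_on {0..D} \<psi>"
  and mphi: "\<And>x y. 0 \<le> x \<Longrightarrow> x \<le> y \<Longrightarrow> y \<le> D \<Longrightarrow> \<phi> y \<le> \<phi> x"
  and mpsi: "\<And>x y. 0 \<le> x \<Longrightarrow> x \<le> y \<Longrightarrow> y \<le> D \<Longrightarrow> \<psi> y \<le> \<psi> x"
  and bphi: "\<And>x. 0 \<le> x \<Longrightarrow> x \<le> D \<Longrightarrow> 0 \<le> \<phi> x \<and> \<phi> x \<le> 1"
  and ppsi: "\<And>x. 0 \<le> x \<Longrightarrow> x < D \<Longrightarrow> 0 < \<psi> x"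
  and sg: "\<And>l r. (l, r) \<in> P \<Longrightarrow> (\<phi> l - b * \<psi> l) * (\<phi> r - b * \<psi> r) < 0"
  and b: "b > 0"
  shows "\<exists>y>0. enat (card P) \<le> num_switches (\<lambda>x. \<phi> x - y * \<psi> x) 0 D"
proof (cases "P = {}")
  case True
  thus ?thesis using b by (intro exI[of _ b]) (simp add: zero_enat_def[symmetric])
next
  case False
  define L where "L = Min (fst ` P)"
  define R where "R = Max (snd ` P)"
  have Ll: "L \<le> l" and rR: "r \<le> R" if "(l, r) \<in> P" for l r
    unfolding L_def R_def using finP that by (auto intro!: Min_le Max_ge simp: image_iff; force)+
  obtain l0 r0 where p0: "(l0, r0) \<in> P" using False by auto
  have L0: "0 < L" unfolding L_def using finP False Pin by (subst Min_gr_iff) auto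
  have RD: "R < D" unfolding R_def using finP False Pin by (subst Max_less_iff) auto
  have LR: "L < R" using Ll[OF p0] rR[OF p0] Pin[OF p0] by auto
  define h where "h x = \<phi> x / \<psi> x" for x
  have fact: "\<phi> x - y * \<psi> x = \<psi> x * (h x - y)" if "0 \<le> x" "x < D" for x y
    using ppsi[OF that] unfolding h_def by (simp add: field_simps)
  have sgh: "(h l - b) * (h r - b) < 0" if "(l, r) \<in> P" for l r
  proof -
    have pl: "0 < \<psi> l" "0 < \<psi> r" using Pin[OF that] by (auto intro!: ppsi)
    have "(\<psi> l * \<psi> r) * ((h l - b) * (h r - b)) < 0"
      using sg[OF that] fact[of l b] fact[of r b] Pin[OF that] by (simp add: algebra_simps)
    thus ?thesis using pl by (simp add: mult_less_0_iff zero_less_mult_iff)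
  qed
  have "eventually (\<lambda>y. 0 < y \<and> (\<forall>p\<in>P. (h (fst p) - y) * (h (snd p) - y) < 0)) (nhds b)"
  proof (intro eventually_conj eventually_ball_finite finP ballI)
    show "eventually (\<lambda>y. 0 < y) (nhds b)" using b order_tendstoD(1)[OF filterlim_ident[of "nhds b"], of 0] by simp
    fix p assume p: "p \<in> P"
    have "((\<lambda>y. (h (fst p) - y) * (h (snd p) - y)) \<longlongrightarrow> (h (fst p) - b) * (h (snd p) - b)) (nhds b)"
      by (intro tendsto_intros filterlim_ident)
    moreover have "(h (fst p) - b) * (h (snd p) - b) < 0" using sgh[of "fst p" "snd p"] p by auto
    ultimately show "eventually (\<lambda>y. (h (fst p) - y) * (h (snd p) - y) < 0) (nhds b)"
      by (rule order_tendstoD(2))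
  qed
  then obtain e where e: "e > 0" "\<And>y. dist y b < e \<Longrightarrow> 0 < y \<and> (\<forall>p\<in>P. (h (fst p) - y) * (h (snd p) - y) < 0)"
    unfolding eventually_nhds_metric by blast
  define V where "V t = 1 / \<psi> t - (1 / \<psi> R) * \<phi> t" for t
  have Vc: "\<bar>h x - h x'\<bar> \<le> V t - V s" if "L \<le> s" "s \<le> x" "x \<le> t" "s \<le> x'" "x' \<le> t" "t \<le> R" for s t x x'
  proof -
    have "\<bar>\<phi> x / \<psi> x - \<phi> x' / \<psi> x'\<bar> \<le> (1 / \<psi> t - 1 / \<psi> s) + (1 / \<psi> R) * (\<phi> s - \<phi> t)"
      using that L0 RD by (intro ratio_var bphi[THEN conjunct1] bphi[THEN conjunct2] mphi mpsi ppsi) auto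
    thus ?thesis unfolding h_def V_def by (simp add: algebra_simps)
  qed
  have "\<exists>y\<in>{b - e/2<..<b + e/2}. finite {x\<in>{L..R}. h x = y}"
  proof (rule finite_level_exists[where V=V and h=h, OF LR])
    show "b - e / 2 < b + e / 2" using e by simp
  qed (rule Vc; assumption)
  then obtain y where y: "y \<in> {b - e/2<..<b + e/2}" and yfin: "finite {x\<in>{L..R}. h x = y}"
    by blast
  have ye: "0 < y \<and> (\<forall>p\<in>P. (h (fst p) - y) * (h (snd p) - y) < 0)"
    using y e by (intro e(2)) (auto simp: dist_real_def abs_less_iff)
  define \<Delta> where "\<Delta> x = \<phi> x - y * \<psi> x" for x
  have "\<forall>p\<in>P. \<exists>s. s \<in> sign_switches \<Delta> 0 D \<and> fst p < fst s \<and> snd s < snd p"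
  proof
    fix p assume p: "p \<in> P"
    obtain l r where lr: "p = (l, r)" by (cases p)
    have lrP: "(l, r) \<in> P" using p lr by simp
    note lrin = Pin[OF lrP]
    have cont: "continuous_on {l..r} \<Delta>" unfolding \<Delta>_def using lrin
      by (intro continuous_intros continuous_on_subset[OF cphi] continuous_on_subset[OF cpsi]) auto
    have "(\<psi> l * \<psi> r) * ((h l - y) * (h r - y)) < 0"
    proof (rule mult_pos_neg)
      show "0 < \<psi> l * \<psi> r" using lrin by (auto intro!: ppsi mult_pos_pos)
      show "(h l - y) * (h r - y) < 0" using ye lrP by auto
    qed
    hence sgl: "\<Delta> l * \<Delta> r < 0" unfolding \<Delta>_def using fact[of l y] fact[of r y] lrin
      by (simp add: algebra_simps)
    have "{x\<in>{l..r}. \<Delta> x = 0} \<subseteq> {x\<in>{L..R}. h x = y}"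
    proof
      fix x assume "x \<in> {x\<in>{l..r}. \<Delta> x = 0}"
      hence x: "l \<le> x" "x \<le> r" "\<Delta> x = 0" by auto
      have "\<psi> x * (h x - y) = 0" using fact[of x y] x lrin unfolding \<Delta>_def by auto
      moreover have "0 < \<psi> x" using x lrin by (intro ppsi) auto
      ultimately show "x \<in> {x\<in>{L..R}. h x = y}" using x Ll[OF lrP] rR[OF lrP] by auto
    qed
    hence fin: "finite {x\<in>{l..r}. \<Delta> x = 0}" using yfin finite_subset by blast
    have "\<exists>c d. (c, d) \<in> sign_switches \<Delta> 0 D \<and> l < c \<and> d < r"
      using lrin by (intro switch_exists2[OF cont sgl fin]) auto
    then obtain c d where
      "(c, d) \<in> sign_switches \<Delta> 0 D" "l < c" "d < r" by blast
    thus "\<exists>s. s \<in> sign_switches \<Delta> 0 D \<and> fst p < fst s \<and> snd s < snd p" using lr by auto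
  qed
  then obtain sw where sw: "\<And>p. p \<in> P \<Longrightarrow> sw p \<in> sign_switches \<Delta> 0 D \<and> fst p < fst (sw p) \<and> snd (sw p) < snd p"
    by metis
  have swle: "fst (sw p) \<le> snd (sw p)" if "p \<in> P" for p
    using sw[OF that] unfolding sign_switches_def by auto
  have inj: "inj_on sw P"
  proof (rule inj_onI, rule ccontr)
    fix p p' assume pp: "p \<in> P" "p' \<in> P" "sw p = sw p'" "p \<noteq> p'"
    have "fst (sw p) \<in> {fst p<..<snd p}" using sw[OF pp(1)] swle[OF pp(1)] by auto
    moreover have "fst (sw p) \<in> {fst p'<..<snd p'}" using sw[OF pp(2)] swle[OF pp(2)] pp(3) by auto
    ultimately show False using Pdisj[OF pp(1,2,4)] by blast
  qed
  have img: "sw ` P \<subseteq> sign_switches \<Delta> 0 D" using sw by auto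
  have "enat (card P) \<le> num_switches \<Delta> 0 D"
  proof (cases "finite (sign_switches \<Delta> 0 D)")
    case True
    thus ?thesis unfolding num_switches_def using card_inj_on_le[OF inj img True] by simp
  qed (simp add: num_switches_def)
  thus ?thesis using ye unfolding \<Delta>_def by blast
qed



lemma classD_facts:
  assumes "classD F"
  shows "continuous_on {0..1} F"
    and "\<And>x y. 0 \<le> x \<Longrightarrow> x \<le> y \<Longrightarrow> y \<le> 1 \<Longrightarrow> F y \<le> F x"
    and "\<And>x y. 0 \<le> x \<Longrightarrow> x < y \<Longrightarrow> y \<le> 1 \<Longrightarrow> F y < F x"
    and "\<And>x. 0 \<le> x \<Longrightarrow> x \<le> 1 \<Longrightarrow> 0 \<le> F x \<and> F x \<le> 1"
    and "\<And>x. 0 \<le> x \<Longrightarrow> x < 1 \<Longrightarrow> 0 < F x"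
    and "F 0 = 1" "F 1 = 0"
proof -
  note d = assms[unfolded classD_def]
  show "continuous_on {0..1} F" "F 0 = 1" "F 1 = 0" using d by auto
  show st: "\<And>x y. 0 \<le> x \<Longrightarrow> x < y \<Longrightarrow> y \<le> 1 \<Longrightarrow> F y < F x"
    using d unfolding monotone_on_def by auto
  show "\<And>x y. 0 \<le> x \<Longrightarrow> x \<le> y \<Longrightarrow> y \<le> 1 \<Longrightarrow> F y \<le> F x"
    using st by (metis order_le_less order_less_imp_le)
  show "\<And>x. 0 \<le> x \<Longrightarrow> x \<le> 1 \<Longrightarrow> 0 \<le> F x \<and> F x \<le> 1" using d by (auto simp: image_subset_iff)
  show "\<And>x. 0 \<le> x \<Longrightarrow> x < 1 \<Longrightarrow> 0 < F x" using st[of _ 1] d by fastforce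
qed

lemma key_classD:
  fixes F G :: "real \<Rightarrow> real" and a b :: real and P :: "(real \<times> real) set"
  assumes F: "classD F" and G: "classD G" and a: "a > 0" and b: "b > 0" and finP: "finite P"
  and Pin: "\<And>l r. (l, r) \<in> P \<Longrightarrow> 0 < l \<and> l < r \<and> r < min 1 (1 / a)"
  and Pdisj: "\<And>p p'. p \<in> P \<Longrightarrow> p' \<in> P \<Longrightarrow> p \<noteq> p' \<Longrightarrow> {fst p<..<snd p} \<inter> {fst p'<..<snd p'} = {}"
  and sg: "\<And>l r. (l, r) \<in> P \<Longrightarrow> (F (a * l) - b * G l) * (F (a * r) - b * G r) < 0"
  shows "enat (card P) \<le> crossing F G"
proof -
  define D where "D = min 1 (1 / a)"
  have aD: "a * x \<le> 1" if "x \<le> D" for x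
  proof -
    have "a * x \<le> a * (1 / a)" using that a unfolding D_def by (intro mult_left_mono) auto
    thus ?thesis using a by simp
  qed
  have D1: "D \<le> 1" unfolding D_def by simp
  note Ff = classD_facts[OF F] and Gf = classD_facts[OF G]
  have "\<exists>y>0. enat (card P) \<le> num_switches (\<lambda>x. F (a * x) - y * G x) 0 D"
  proof (rule key[OF finP])
    show "\<And>l r. (l, r) \<in> P \<Longrightarrow> 0 < l \<and> l < r \<and> r < D" using Pin unfolding D_def by auto
    show "\<And>p p'. p \<in> P \<Longrightarrow> p' \<in> P \<Longrightarrow> p \<noteq> p' \<Longrightarrow> {fst p<..<snd p} \<inter> {fst p'<..<snd p'} = {}"
      by (rule Pdisj)
    show "continuous_on {0..D} (\<lambda>x. F (a * x))"
      using a aD by (intro continuous_on_compose2[OF Ff(1)] continuous_intros) auto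
    show "continuous_on {0..D} G" using D1 by (intro continuous_on_subset[OF Gf(1)]) auto
    show "\<And>x y. 0 \<le> x \<Longrightarrow> x \<le> y \<Longrightarrow> y \<le> D \<Longrightarrow> F (a * y) \<le> F (a * x)"
      using a aD by (intro Ff(2)) (auto intro: mult_left_mono)
    show "\<And>x y. 0 \<le> x \<Longrightarrow> x \<le> y \<Longrightarrow> y \<le> D \<Longrightarrow> G y \<le> G x"
      using D1 by (intro Gf(2)) auto
    show "\<And>x. 0 \<le> x \<Longrightarrow> x \<le> D \<Longrightarrow> 0 \<le> F (a * x) \<and> F (a * x) \<le> 1"
      using a aD by (intro Ff(4)) auto
    show "\<And>x. 0 \<le> x \<Longrightarrow> x < D \<Longrightarrow> 0 < G x" using D1 by (intro Gf(5)) auto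
  qed (use sg b in auto)
  then obtain y where y: "y > 0" "enat (card P) \<le> num_switches (\<lambda>x. F (a * x) - y * G x) 0 D" by blast
  have "num_switches (\<lambda>x. F (a * x) - y * G x) 0 D \<le> crossing F G"
    unfolding crossing_def D_def
    by (rule SUP_upper2[of "(a, y)"]) (use a y in auto)
  thus ?thesis using y by simp
qed

lemma enat_le_by_nat: fixes x y :: enat
  assumes "\<And>k. enat k \<le> x \<Longrightarrow> enat k \<le> y" shows "x \<le> y"
proof (cases x)
  case (enat m) thus ?thesis using assms[of m] by simp
next
  case infinity
  show ?thesis
  proof (cases y)
    case (enat m) thus ?thesis using assms[of "Suc m"] infinity by simp
  qed simp
qed

lemma switches_sep:
  assumes s: "s \<in> sign_switches \<Delta> c0 d0" and s': "s' \<in> sign_switches \<Delta> c0 d0" and ne: "s \<noteq> s'"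
    and le: "fst s \<le> fst s'"
  shows "snd s < fst s'"
proof (rule ccontr)
  assume ov: "\<not> snd s < fst s'"
  obtain c d where cd: "s = (c, d)" by (cases s)
  obtain c' d' where cd': "s' = (c', d')" by (cases s')
  from s cd have S: "c0 < c" "c \<le> d" "d < d0" "\<forall>x\<in>{c..d}. \<Delta> x = 0"
    and "\<exists>\<delta>>0. \<delta> \<le> min (c - c0) (d0 - d) \<and> (\<forall>x\<in>{0<..\<delta>}. \<Delta> (c - x) * \<Delta> (d + x) < 0)"
    unfolding sign_switches_def by auto
  then obtain \<delta> where \<delta>: "\<delta> > 0" "\<forall>x\<in>{0<..\<delta>}. \<Delta> (c - x) * \<Delta> (d + x) < 0" by auto
  from s' cd' have S': "c0 < c'" "c' \<le> d'" "d' < d0" "\<forall>x\<in>{c'..d'}. \<Delta> x = 0"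
    and "\<exists>\<delta>>0. \<delta> \<le> min (c' - c0) (d0 - d') \<and> (\<forall>x\<in>{0<..\<delta>}. \<Delta> (c' - x) * \<Delta> (d' + x) < 0)"
    unfolding sign_switches_def by auto
  then obtain \<delta>' where \<delta>': "\<delta>' > 0" "\<forall>x\<in>{0<..\<delta>'}. \<Delta> (c' - x) * \<Delta> (d' + x) < 0" by auto
  have cc: "c \<le> c'" "c' \<le> d" using le ov cd cd' by auto
  show False
  proof (cases "c = c'")
    case False
    hence "c < c'" using cc by auto
    define x where "x = min \<delta>' (c' - c)"
    have "x \<in> {0<..\<delta>'}" unfolding x_def using \<delta>' \<open>c < c'\<close> by auto
    moreover have "c \<le> c' - x" "c' - x \<le> d" using cc \<open>c < c'\<close> \<delta>' unfolding x_def by auto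
    moreover have "\<Delta> (c' - x) = 0" using S(4) calculation(2,3) by auto
    ultimately show False using \<delta>'(2) by fastforce
  next
    case True
    hence "d \<noteq> d'" using ne cd cd' by auto
    show False
    proof (cases "d < d'")
      case True
      define x where "x = min \<delta> (d' - d)"
      have "x \<in> {0<..\<delta>}" unfolding x_def using \<delta> True by auto
      moreover have "c' \<le> d + x" "d + x \<le> d'" using cc True \<open>c = c'\<close> S(2) \<delta> unfolding x_def by auto
      moreover have "\<Delta> (d + x) = 0" using S'(4) calculation(2,3) by auto
      ultimately show False using \<delta>(2) by fastforce
    next
      case False
      hence "d' < d" using \<open>d \<noteq> d'\<close> by auto
      define x where "x = min \<delta>' (d - d')"
      have "x \<in> {0<..\<delta>'}" unfolding x_def using \<delta>' \<open>d' < d\<close> by auto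
      moreover have "c \<le> d' + x" "d' + x \<le> d" using \<open>d' < d\<close> \<open>c = c'\<close> S'(2) \<delta>' unfolding x_def by auto
      moreover have "\<Delta> (d' + x) = 0" using S(4) calculation(2,3) by auto
      ultimately show False using \<delta>'(2) by fastforce
    qed
  qed
qed



lemma ev_lt: "(0::real) < c \<Longrightarrow> eventually (\<lambda>x. x < c) (at_right 0)"
  by (intro order_tendstoD(2)[OF tendsto_ident_at]) 

lemma part_a:
  fixes f g :: "real \<Rightarrow> real" and F G :: "nat \<Rightarrow> real \<Rightarrow> real"
  assumes f: "classD f" and g: "classD g" and F: "\<And>n. classD (F n)" and G: "\<And>n. classD (G n)"
  and Fl: "\<And>x. x \<in> {0..1} \<Longrightarrow> (\<lambda>n. F n x) \<longlonglongrightarrow> f x"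
  and Gl: "\<And>x. x \<in> {0..1} \<Longrightarrow> (\<lambda>n. G n x) \<longlonglongrightarrow> g x"
  shows "crossing f g \<le> (SUP n. crossing (F n) (G n))"
proof -
  have "num_switches (\<lambda>x. f (fst ab * x) - snd ab * g x) 0 (min 1 (1 / fst ab)) \<le> (SUP n. crossing (F n) (G n))"
    if ab: "fst ab > 0" "snd ab > 0" for ab
  proof (rule enat_le_by_nat)
    define a where "a = fst ab"
    define b where "b = snd ab"
    define D where "D = min 1 (1 / a)"
    define \<Delta> where "\<Delta> x = f (a * x) - b * g x" for x
    have a: "a > 0" and b: "b > 0" using ab unfolding a_def b_def by auto
    have aD: "a * x \<le> 1" if "x \<le> D" for x
    proof -
      have "a * x \<le> a * (1 / a)" using that a unfolding D_def by (intro mult_left_mono) auto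
      thus ?thesis using a by simp
    qed
    have D1: "D \<le> 1" unfolding D_def by simp
    fix k assume "enat k \<le> num_switches (\<lambda>x. f (fst ab * x) - snd ab * g x) 0 (min 1 (1 / fst ab))"
    hence k: "enat k \<le> num_switches \<Delta> 0 D" unfolding \<Delta>_def a_def b_def D_def by simp
    obtain S where S: "S \<subseteq> sign_switches \<Delta> 0 D" "card S = k" "finite S"
    proof (cases "finite (sign_switches \<Delta> 0 D)")
      case True
      hence "k \<le> card (sign_switches \<Delta> 0 D)" using k unfolding num_switches_def by simp
      thus ?thesis using obtain_subset_with_card_n that by metis
    next
      case False
      thus ?thesis using infinite_arbitrarily_large that by metis
    qed
    have "eventually (\<lambda>x. \<forall>s\<in>S. (0 < x \<and> x < fst s \<and> snd s + x < D \<and> \<Delta> (fst s - x) * \<Delta> (snd s + x) < 0)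
        \<and> (\<forall>s'\<in>S. s \<noteq> s' \<longrightarrow> fst s \<le> fst s' \<longrightarrow> snd s + x < fst s' - x)) (at_right 0)"
    proof (rule eventually_ball_finite[OF S(3)], rule ballI)
      fix s assume sS: "s \<in> S"
      hence sw: "s \<in> sign_switches \<Delta> 0 D" using S by auto
      obtain c d where cd: "s = (c, d)" by (cases s)
      from sw cd have c0: "0 < c" "c \<le> d" "d < D"
        and "\<exists>\<delta>>0. \<delta> \<le> min (c - 0) (D - d) \<and> (\<forall>x\<in>{0<..\<delta>}. \<Delta> (c - x) * \<Delta> (d + x) < 0)"
        unfolding sign_switches_def by auto
      then obtain \<delta> where \<delta>: "\<delta> > 0" "\<forall>x\<in>{0<..\<delta>}. \<Delta> (c - x) * \<Delta> (d + x) < 0" by auto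
      show "eventually (\<lambda>x. (0 < x \<and> x < fst s \<and> snd s + x < D \<and> \<Delta> (fst s - x) * \<Delta> (snd s + x) < 0)
        \<and> (\<forall>s'\<in>S. s \<noteq> s' \<longrightarrow> fst s \<le> fst s' \<longrightarrow> snd s + x < fst s' - x)) (at_right 0)"
      proof (intro eventually_conj)
      show "eventually (\<lambda>x. 0 < x) (at_right (0::real))" by (rule eventually_at_right_less)
      show "eventually (\<lambda>x. x < fst s) (at_right 0)" using c0 cd by (intro ev_lt) auto
      show "eventually (\<lambda>x. snd s + x < D) (at_right 0)"
        using ev_lt[of "D - d"] c0 cd by (auto elim: eventually_mono)
      show "eventually (\<lambda>x. \<Delta> (fst s - x) * \<Delta> (snd s + x) < 0) (at_right 0)"
        unfolding eventually_at_right_field using \<delta> cd by (intro exI[of _ \<delta>]) auto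
      show "eventually (\<lambda>x. \<forall>s'\<in>S. s \<noteq> s' \<longrightarrow> fst s \<le> fst s' \<longrightarrow> snd s + x < fst s' - x) (at_right 0)"
      proof (intro eventually_ball_finite S(3) ballI)
        fix s' assume s'S: "s' \<in> S"
        show "eventually (\<lambda>x. s \<noteq> s' \<longrightarrow> fst s \<le> fst s' \<longrightarrow> snd s + x < fst s' - x) (at_right 0)"
        proof (cases "s \<noteq> s' \<and> fst s \<le> fst s'")
          case True
          hence "snd s < fst s'" using switches_sep[OF sw _ ] s'S S(1) by blast
          hence "eventually (\<lambda>x. x < (fst s' - snd s) / 2) (at_right 0)" by (intro ev_lt) auto
          thus ?thesis by (auto elim: eventually_mono)
        qed auto
      qed
      qed
    qed
    then obtain x where x: "\<And>s. s \<in> S \<Longrightarrow> 0 < x \<and> x < fst s \<and> snd s + x < D \<and> \<Delta> (fst s - x) * \<Delta> (snd s + x) < 0"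
      "\<And>s s'. s \<in> S \<Longrightarrow> s' \<in> S \<Longrightarrow> s \<noteq> s' \<Longrightarrow> fst s \<le> fst s' \<Longrightarrow> snd s + x < fst s' - x"
      using ev_pos by blast
    have swle: "fst s \<le> snd s" if "s \<in> S" for s using that S(1) unfolding sign_switches_def by auto
    define P where "P = (\<lambda>s. (fst s - x, snd s + x)) ` S"
    have inj: "inj_on (\<lambda>s. (fst s - x, snd s + x)) S" by (rule inj_onI) (auto simp: prod_eq_iff)
    have cardP: "card P = k" unfolding P_def using card_image[OF inj] S by simp
    have finP: "finite P" unfolding P_def using S by simp
    have Pin: "0 < l \<and> l < r \<and> r < D" if "(l, r) \<in> P" for l r
      using that x(1) swle unfolding P_def by force
    have Pdisj: "{fst p<..<snd p} \<inter> {fst p'<..<snd p'} = {}" if pp: "p \<in> P" "p' \<in> P" "p \<noteq> p'" for p p'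
    proof -
      obtain s where s1: "s \<in> S" "p = (fst s - x, snd s + x)"
        using pp(1) unfolding P_def by blast
      obtain s' where s2: "s' \<in> S" "p' = (fst s' - x, snd s' + x)"
        using pp(2) unfolding P_def by blast
      note ss = s1(1) s2(1) s1(2) s2(2)
      hence ne: "s \<noteq> s'" using pp(3) by auto
      show ?thesis
      proof (cases "fst s \<le> fst s'")
        case True
        thus ?thesis using x(2)[OF ss(1,2) ne True] ss by auto
      next
        case False
        thus ?thesis using x(2)[OF ss(2,1) ne[symmetric]] ss by auto
      qed
    qed
    have sgP: "\<Delta> l * \<Delta> r < 0" if "(l, r) \<in> P" for l r
      using that x(1) unfolding P_def by force
    have "eventually (\<lambda>n. \<forall>p\<in>P. (F n (a * fst p) - b * G n (fst p)) * (F n (a * snd p) - b * G n (snd p)) < 0) sequentially"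
    proof (intro eventually_ball_finite finP ballI)
      fix p assume p: "p \<in> P"
      obtain l r where lr: "p = (l, r)" by (cases p)
      have lr': "0 < l" "l < r" "r < D" using Pin p lr by auto
      have "(\<lambda>n. (F n (a * l) - b * G n l) * (F n (a * r) - b * G n r)) \<longlonglongrightarrow> \<Delta> l * \<Delta> r"
        unfolding \<Delta>_def using lr' a D1 aD[of l] aD[of r]
        by (intro tendsto_intros Fl Gl) auto
      moreover have "\<Delta> l * \<Delta> r < 0" using sgP p lr by auto
      ultimately have "eventually (\<lambda>n. (F n (a * l) - b * G n l) * (F n (a * r) - b * G n r) < 0) sequentially"
        by (rule order_tendstoD(2))
      thus "eventually (\<lambda>n. (F n (a * fst p) - b * G n (fst p)) * (F n (a * snd p) - b * G n (snd p)) < 0) sequentially"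
        using lr by simp
    qed
    then obtain N where N: "\<And>p. p \<in> P \<Longrightarrow> (F N (a * fst p) - b * G N (fst p)) * (F N (a * snd p) - b * G N (snd p)) < 0"
      unfolding eventually_sequentially by blast
    have "enat (card P) \<le> crossing (F N) (G N)"
    proof (rule key_classD[OF F G a b finP])
      show "\<And>l r. (l, r) \<in> P \<Longrightarrow> 0 < l \<and> l < r \<and> r < min 1 (1 / a)" using Pin unfolding D_def by blast
      show "\<And>p p'. p \<in> P \<Longrightarrow> p' \<in> P \<Longrightarrow> p \<noteq> p' \<Longrightarrow> {fst p<..<snd p} \<inter> {fst p'<..<snd p'} = {}"
        by (rule Pdisj)
      show "\<And>l r. (l, r) \<in> P \<Longrightarrow> (F N (a * l) - b * G N l) * (F N (a * r) - b * G N r) < 0"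
        using N by force
    qed
    also have "\<dots> \<le> (SUP n. crossing (F n) (G n))" by (rule SUP_upper) simp
    finally show "enat k \<le> (SUP n. crossing (F n) (G n))" using cardP by simp
  qed
  thus ?thesis unfolding crossing_def by (intro SUP_least) auto
qed



lemma crossing_ge2:
  fixes f g :: "real \<Rightarrow> real"
  assumes f: "classD f" and g: "classD g" and le: "\<forall>x\<in>{0..1}. g x \<le> f x"
    and x0: "x0 \<in> {0..1}" "f x0 \<noteq> g x0"
  shows "enat 2 \<le> crossing f g"
proof -
  note ff = classD_facts[OF f] and gf = classD_facts[OF g]
  have x01: "0 < x0" "x0 < 1" using x0 ff(6,7) gf(6,7) by (auto simp: less_le)
  define e where "e = f x0 - g x0"
  have e: "e > 0" using le x0 unfolding e_def by force
  obtain d where d: "d > 0" "\<And>x'. x' \<in> {0..1} \<Longrightarrow> dist x' x0 < d \<Longrightarrow> dist (f x') (f x0) < e / 2"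
  proof -
    from ff(1)[unfolded continuous_on_iff, rule_format, OF x0(1), of "e / 2"] e
    show ?thesis using that by auto
  qed
  define t where "t = x0 + min (d / 2) ((1 - x0) / 2)"
  have mn: "min (d / 2) ((1 - x0) / 2) \<le> (1 - x0) / 2" "0 < min (d / 2) ((1 - x0) / 2)" using d(1) x01 by (auto simp: min_def)
  have t1: "x0 < t" unfolding t_def using mn(2) by linarith
  have t2: "t < 1" unfolding t_def using mn(1) x01(2) by argo
  note t = t1 t2
  have ft: "f t > g x0 + e / 2"
  proof -
    have "dist (f t) (f x0) < e / 2" using d t x01 by (intro d(2)) (auto simp: t_def dist_real_def)
    hence a1: "\<bar>f t - f x0\<bar> < e / 2" unfolding dist_real_def .
    have a2: "f x0 - f t \<le> \<bar>f t - f x0\<bar>" by linarith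
    from a1 a2 show ?thesis unfolding e_def by argo
  qed
  define a where "a = t / x0"
  define b where "b = 1 + e / 4"
  define D where "D = x0 / t"
  have a: "a > 0" "a > 1" unfolding a_def using t x01 by (auto simp: field_simps)
  have b: "b > 0" unfolding b_def using e by auto
  have DD: "min 1 (1 / a) = D" unfolding D_def a_def using t x01 by auto
  have D: "x0 < D" "D < 1" unfolding D_def using t x01 by (auto simp: field_simps)
  have aD: "a * D = 1" "a * x0 = t" unfolding a_def D_def using t x01 by auto
  define \<Delta> where "\<Delta> x = f (a * x) - b * g x" for x
  have ax1: "a * x \<le> 1" if "x \<le> D" for x
    using mult_left_mono[OF that, of a] a aD by auto
  have cont: "continuous_on {0..D} \<Delta>" unfolding \<Delta>_def
    using a ax1 D by (intro continuous_intros continuous_on_compose2[OF ff(1)] continuous_on_subset[OF gf(1)]) auto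
  have \<Delta>0: "\<Delta> 0 < 0" unfolding \<Delta>_def b_def using ff(6) gf(6) e by auto
  have \<Delta>x0: "\<Delta> x0 > 0"
  proof -
    have "b * g x0 \<le> g x0 + e / 4" unfolding b_def using gf(4)[of x0] x01 e
      by (auto simp: algebra_simps intro!: mult_left_le)
    thus ?thesis unfolding \<Delta>_def aD using ft e by auto
  qed
  have \<Delta>D: "\<Delta> D < 0"
  proof -
    have "0 < g D" using D x01 by (intro gf(5)) auto
    thus ?thesis unfolding \<Delta>_def aD ff(7) using b by auto
  qed
  obtain d0 where d0: "d0 > 0" "\<And>x'. x' \<in> {0..D} \<Longrightarrow> dist x' 0 < d0 \<Longrightarrow> dist (\<Delta> x') (\<Delta> 0) < - \<Delta> 0"
  proof -
    have "0 \<in> {0..D}" using D x01 by auto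
    from cont[unfolded continuous_on_iff, rule_format, OF this, of "- \<Delta> 0"] \<Delta>0
    show ?thesis using that by auto
  qed
  define p0 where "p0 = min (d0 / 2) (x0 / 2)"
  have p0: "0 < p0" "p0 < x0" "\<Delta> p0 < 0"
  proof -
    show "0 < p0" "p0 < x0" unfolding p0_def using d0 x01 by auto
    hence "dist (\<Delta> p0) (\<Delta> 0) < - \<Delta> 0" using D d0 by (intro d0(2)) (auto simp: p0_def dist_real_def)
    thus "\<Delta> p0 < 0" by (auto simp: dist_real_def)
  qed
  obtain d2 where d2: "d2 > 0" "\<And>x'. x' \<in> {0..D} \<Longrightarrow> dist x' D < d2 \<Longrightarrow> dist (\<Delta> x') (\<Delta> D) < - \<Delta> D"
  proof -
    have "D \<in> {0..D}" using D x01 by auto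
    from cont[unfolded continuous_on_iff, rule_format, OF this, of "- \<Delta> D"] \<Delta>D
    show ?thesis using that by auto
  qed
  define p2 where "p2 = D - min (d2 / 2) ((D - x0) / 2)"
  have p2: "x0 < p2" "p2 < D" "\<Delta> p2 < 0"
  proof -
    have m1: "min (d2 / 2) ((D - x0) / 2) \<le> (D - x0) / 2" by (rule min.cobounded2)
    have m2: "0 < min (d2 / 2) ((D - x0) / 2)" using d2(1) D(1) by (simp add: min_def)
    show "x0 < p2" unfolding p2_def using m1 D(1) by argo
    show p2D: "p2 < D" unfolding p2_def using m2 by argo
    have "0 \<le> p2" unfolding p2_def using m1 D(1) x01(1) by argo
    moreover have "D - p2 < d2" unfolding p2_def using d2(1) by (simp add: min_def)
    ultimately have "dist (\<Delta> p2) (\<Delta> D) < - \<Delta> D" using p2D by (intro d2(2)) (auto simp: dist_real_def)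
    thus "\<Delta> p2 < 0" by (auto simp: dist_real_def)
  qed
  define P where "P = {(p0, x0), (x0, p2)}"
  have cardP: "card P = 2" unfolding P_def using p0 by auto
  have "enat (card P) \<le> crossing f g"
  proof (rule key_classD[OF f g a(1) b])
    show "finite P" unfolding P_def by simp
    show "\<And>l r. (l, r) \<in> P \<Longrightarrow> 0 < l \<and> l < r \<and> r < min 1 (1 / a)"
      unfolding DD P_def using p0 p2 x01 D by auto
    show "\<And>p p'. p \<in> P \<Longrightarrow> p' \<in> P \<Longrightarrow> p \<noteq> p' \<Longrightarrow> {fst p<..<snd p} \<inter> {fst p'<..<snd p'} = {}"
      unfolding P_def by auto
    show "\<And>l r. (l, r) \<in> P \<Longrightarrow> (f (a * l) - b * g l) * (f (a * r) - b * g r) < 0"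
      unfolding P_def using p0 p2 \<Delta>x0 unfolding \<Delta>_def
      by (auto simp: mult_neg_pos mult_pos_neg)
  qed
  thus ?thesis using cardP by simp
qed

theorem proposition3p5:
  fixes f g :: "real \<Rightarrow> real" and F G :: "nat \<Rightarrow> real \<Rightarrow> real"
  assumes "classD f" and "classD g"
    and "\<And>n. classD (F n)" and "\<And>n. classD (G n)"
    and "uniform_limit {0..1} F f sequentially"
    and "uniform_limit {0..1} G g sequentially"
  shows "crossing f g \<le> (SUP n. crossing (F n) (G n)) \<and>
    ((\<forall>n. dominated (G n) (F n)) \<longrightarrow> (\<forall>x\<in>{0..1}. f x = g x) \<or> dominated g f)"
proof -
  have Fl: "\<And>x. x \<in> {0..1} \<Longrightarrow> (\<lambda>n. F n x) \<longlonglongrightarrow> f x"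
    using tendsto_uniform_limitI[OF assms(5)] by blast
  have Gl: "\<And>x. x \<in> {0..1} \<Longrightarrow> (\<lambda>n. G n x) \<longlonglongrightarrow> g x"
    using tendsto_uniform_limitI[OF assms(6)] by blast
  have pa: "crossing f g \<le> (SUP n. crossing (F n) (G n))"
    by (rule part_a[OF assms(1-4) Fl Gl])
  have pb: "(\<forall>x\<in>{0..1}. f x = g x) \<or> dominated g f" if dom: "\<forall>n. dominated (G n) (F n)"
  proof (cases "\<forall>x\<in>{0..1}. f x = g x")
    case False
    then obtain x0 where x0: "x0 \<in> {0..1}" "f x0 \<noteq> g x0" by auto
    have cr: "crossing (F n) (G n) = 2" for n using dom unfolding dominated_def by auto
    have SUP2: "(SUP n. crossing (F n) (G n)) = 2" unfolding cr by simp
    have le: "\<forall>x\<in>{0..1}. g x \<le> f x"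
    proof
      fix x :: real assume x: "x \<in> {0..1}"
      show "g x \<le> f x"
        using dom x by (intro LIMSEQ_le[OF Gl[OF x] Fl[OF x]]) (auto simp: dominated_def)
    qed
    have "enat 2 \<le> crossing f g" by (rule crossing_ge2[OF assms(1,2) le x0])
    hence "crossing f g = 2" using pa SUP2 by (simp add: numeral_eq_enat)
    thus ?thesis using le unfolding dominated_def by auto
  qed simp
  show ?thesis using pa pb by blast
qed


end
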